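(* Let $P$ be a disjunctive program and $P_1,P_2,\dots$ a module sequence for $P$. Then $M$ is a stable model of $P$ if and only if there exists a sequence $M_1,M_2,\dots$ such that (1) for each $i\ge1$, $M_i$ is a stable model of $P_i$; (2) for each $i\ge 1$, $M_i=M_{i+1}\cap\mathit{atom}(P_i)$; (3) $M=\bigcup_{i\ge1}M_i$.
   Context: A disjunctive program is a set of rules $r$ of the form $A_1\vee\dots\vee A_m\leftarrow L_1,\dots,L_n$ ($m>0$, $n\ge0$), $A_j$ atoms, $L_i$ atoms or negated atoms $\mathtt{not}\,A$, possibly with function symbols; $head(r)=\{A_1,\dots,A_m\}$, $body^+(r)$ (resp. $body^-(r)$) is the set of atoms $A$ such that $A$ (resp. $\mathtt{not}\,A$) is among the $L_i$. $\mathsf{Ground}(P)$ is the ground instantiation of $P$; for a set $X$ of ground rules, $\mathit{atom}(X)$ is the set of ground atoms occurring in $X$. For a set of ground atoms $M$, the Gelfond–Lifschitz reduct $P^M$ is obtained from $\mathsf{Ground}(P)$ (for a ground program, from the program itself) by deleting every rule $r$ with $body^-(r)\cap M\neq\emptyset$ and deleting all negative literals from the remaining rules. $M$ is a stable model of $P$ iff $M$ is a minimal (w.r.t. set inclusion) Herbrand model of $P^M$. The dependency graph of $P$ has ground atoms as vertices and an edge $A\to B$ whenever for some $r\in\mathsf{Ground}(P)$, $A\in head(r)$ and $B$ occurs in $r$ (body or head); $A$ depends on $B$ if there is a directed path from $A$ to $B$ (every atom depends on itself). $GH$ is the set of ground atoms occurring in heads of rules in $\mathsf{Ground}(P)$;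 for an enumeration $p_1,p_2,\dots$ of $GH$, the induced module sequence is $P_1=\{r\in\mathsf{Ground}(P)\mid p_1\text{ depends on some }A\in head(r)\}$, $P_{i+1}=P_i\cup\{r\in\mathsf{Ground}(P)\mid p_{i+1}\text{ depends on some }A\in head(r)\}$. A module sequence for $P$ is one induced by some enumeration of $GH$. *)

theory Defs
  imports Main
begin

text \<open>Ground disjunctive rules  A1 v ... v Am <- B1,...,Bk, not C1,...,not Cl
  over ground atoms of type 'a.  A (ground) program is a set of such rules;
  a program with variables is represented by its ground instantiation Ground(P).\<close>

datatype 'a rule = Rule (rhead: "'a list") (rpos: "'a list") (rneg: "'a list")

definition head :: "'a rule \<Rightarrow> 'a set" where "head r = set (rhead r)"
definition body_pos :: "'a rule \<Rightarrow> 'a set" where "body_pos r = set (rpos r)"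
definition body_neg :: "'a rule \<Rightarrow> 'a set" where "body_neg r = set (rneg r)"

definition atoms_of_rule :: "'a rule \<Rightarrow> 'a set" where
  "atoms_of_rule r = head r \<union> body_pos r \<union> body_neg r"

definition atom :: "'a rule set \<Rightarrow> 'a set" where
  "atom X = (\<Union>r\<in>X. atoms_of_rule r)"

definition reduct :: "'a rule set \<Rightarrow> 'a set \<Rightarrow> 'a rule set" where
  "reduct P M = (\<lambda>r. Rule (rhead r) (rpos r) []) ` {r \<in> P. body_neg r \<inter> M = {}}"

text \<open>M is a (Herbrand) model of a program (negation-free programs in use).\<close>
definition is_model :: "'a rule set \<Rightarrow> 'a set \<Rightarrow> bool" where
  "is_model Q M \<longleftrightarrow> (\<forall>r\<in>Q. body_pos r \<subseteq> M \<and> body_neg r \<inter> M = {} \<longrightarrow> head r \<inter> M \<noteq> {})"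

definition minimal_model :: "'a rule set \<Rightarrow> 'a set \<Rightarrow> bool" where
  "minimal_model Q M \<longleftrightarrow> is_model Q M \<and> (\<forall>N. N \<subset> M \<longrightarrow> \<not> is_model Q N)"

definition stable_model :: "'a rule set \<Rightarrow> 'a set \<Rightarrow> bool" where
  "stable_model P M \<longleftrightarrow> minimal_model (reduct P M) M"

definition dep_edge :: "'a rule set \<Rightarrow> 'a \<Rightarrow> 'a \<Rightarrow> bool" where
  "dep_edge P A B \<longleftrightarrow> (\<exists>r\<in>P. A \<in> head r \<and> B \<in> atoms_of_rule r)"

definition depends :: "'a rule set \<Rightarrow> 'a \<Rightarrow> 'a \<Rightarrow> bool" where
  "depends P A B \<longleftrightarrow> (A, B) \<in> {(x, y). dep_edge P x y}\<^sup>*"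

definition GH :: "'a rule set \<Rightarrow> 'a set" where
  "GH P = (\<Union>r\<in>P. head r)"

text \<open>Module sequence induced by an enumeration p (0-indexed: Ps 0 = P_1).\<close>
definition induced_modules :: "'a rule set \<Rightarrow> (nat \<Rightarrow> 'a) \<Rightarrow> nat \<Rightarrow> 'a rule set" where
  "induced_modules P p i = {r \<in> P. \<exists>j\<le>i. \<exists>A\<in>head r. depends P (p j) A}"

definition module_sequence :: "'a rule set \<Rightarrow> (nat \<Rightarrow> 'a rule set) \<Rightarrow> bool" where
  "module_sequence P Ps \<longleftrightarrow> (\<exists>p. range p = GH P \<and> Ps = induced_modules P p)"

end

theory Submission
  imports Defs
begin

lemma model_reduct:
  "is_model (reduct Q M) N \<longleftrightarrow> (\<forall>r\<in>Q. body_neg r \<inter> M = {} \<longrightarrow> body_pos r \<subseteq> N \<longrightarrow> head r \<inter> N \<noteq> {})"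
  by (auto simp: is_model_def reduct_def head_def body_pos_def body_neg_def)

lemma stable_iff:
  "stable_model Q M \<longleftrightarrow> is_model (reduct Q M) M \<and> (\<forall>N. N \<subset> M \<longrightarrow> \<not> is_model (reduct Q M) N)"
  by (simp add: stable_model_def minimal_model_def)

theorem theorem3p6:
  fixes P :: "'a rule set" and Ps :: "nat \<Rightarrow> 'a rule set" and M :: "'a set"
  assumes "\<forall>r\<in>P. rhead r \<noteq> []"
    and "module_sequence P Ps"
  shows "stable_model P M \<longleftrightarrow>
    (\<exists>Ms :: nat \<Rightarrow> 'a set.
        (\<forall>i. stable_model (Ps i) (Ms i)) \<and>
        (\<forall>i. Ms i = Ms (Suc i) \<inter> atom (Ps i)) \<and>
        M = (\<Union>i. Ms i))"
proof -
  obtain p where rp: "range p = GH P" and Psd: "Ps = induced_modules P p"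
    using assms(2) unfolding module_sequence_def by blast
  define U where "U i = atom (Ps i)" for i
  have F1: "Ps i \<subseteq> P" for i unfolding Psd induced_modules_def by auto
  have F2: "atoms_of_rule r \<subseteq> U i" if "r \<in> Ps i" for r i
    using that unfolding U_def atom_def by auto
  have F3: "r \<in> Ps i" if h3: "r \<in> P" "head r \<inter> U i \<noteq> {}" for r i
  proof -
    obtain A where A: "A \<in> head r" "A \<in> U i" using h3(2) by blast
    then obtain r' where r': "r' \<in> Ps i" "A \<in> atoms_of_rule r'" unfolding U_def atom_def by auto
    then obtain j A' where j: "j \<le> i" "A' \<in> head r'" "depends P (p j) A'" "r' \<in> P"
      unfolding Psd induced_modules_def by auto
    have "dep_edge P A' A" using j r' unfolding dep_edge_def by blast
    hence "depends P (p j) A" using j(3) unfolding depends_def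
      by (simp add: rtrancl.rtrancl_into_rtrancl)
    thus ?thesis using h3(1) A j unfolding Psd induced_modules_def by auto
  qed
  have F4: "Ps i \<subseteq> Ps k" if "i \<le> k" for i k
    using that unfolding Psd induced_modules_def using le_trans by blast
  have F4': "U i \<subseteq> U k" if "i \<le> k" for i k
    using F4[OF that] unfolding U_def atom_def by auto
  have F6: "\<exists>j. a \<in> U j" if h6: "a \<in> head r" "r \<in> P" for a r
  proof -
    have "a \<in> GH P" using h6 unfolding GH_def by auto
    then obtain j where "a = p j" using rp by (metis imageE)
    hence "r \<in> Ps j" using h6 unfolding Psd induced_modules_def depends_def by auto
    thus ?thesis using h6 F2 unfolding atoms_of_rule_def by blast
  qed
  have F5: "\<exists>j. r \<in> Ps j" if h5: "r \<in> P" for r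
  proof -
    obtain a where a: "a \<in> head r" using assms(1) h5 unfolding head_def
      by (metis list.set_sel(1))
    then obtain j where "a \<in> U j" using F6 h5 by blast
    thus ?thesis using F3 h5 a by blast
  qed
  show ?thesis
  proof
    assume st: "stable_model P M"
    hence mod: "is_model (reduct P M) M" and mn: "\<And>N. N \<subset> M \<Longrightarrow> \<not> is_model (reduct P M) N"
      by (auto simp: stable_iff)
    define Ms where "Ms i = M \<inter> U i" for i
    have s1: "stable_model (Ps i) (Ms i)" for i
    proof -
      have m1: "is_model (reduct (Ps i) (Ms i)) (Ms i)"
        unfolding model_reduct
      proof (intro ballI impI)
        fix r assume r: "r \<in> Ps i" "body_neg r \<inter> Ms i = {}" "body_pos r \<subseteq> Ms i"
        have at: "atoms_of_rule r \<subseteq> U i" using F2 r(1) .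
        have "body_neg r \<inter> M = {}" using r(2) at unfolding Ms_def atoms_of_rule_def by auto
        moreover have "body_pos r \<subseteq> M" using r(3) unfolding Ms_def by auto
        ultimately have "head r \<inter> M \<noteq> {}" using mod r(1) F1 unfolding model_reduct by blast
        thus "head r \<inter> Ms i \<noteq> {}" using at unfolding Ms_def atoms_of_rule_def by auto
      qed
      have m2: "\<not> is_model (reduct (Ps i) (Ms i)) N" if N: "N \<subset> Ms i" for N
      proof
        assume nm: "is_model (reduct (Ps i) (Ms i)) N"
        define N' where "N' = N \<union> (M - U i)"
        have "N' \<subset> M" using N unfolding N'_def Ms_def by auto
        moreover have "is_model (reduct P M) N'"
          unfolding model_reduct
        proof (intro ballI impI)
          fix r assume r: "r \<in> P" "body_neg r \<inter> M = {}" "body_pos r \<subseteq> N'"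
          show "head r \<inter> N' \<noteq> {}"
          proof (cases "head r \<inter> U i = {}")
            case True
            have "body_pos r \<subseteq> M" using r(3) N unfolding N'_def Ms_def by auto
            hence "head r \<inter> M \<noteq> {}" using mod r unfolding model_reduct by blast
            thus ?thesis using True unfolding N'_def by auto
          next
            case False
            hence ri: "r \<in> Ps i" using F3 r(1) by blast
            have at: "atoms_of_rule r \<subseteq> U i" using F2 ri .
            have "body_pos r \<subseteq> N" using r(3) at unfolding N'_def atoms_of_rule_def by auto
            moreover have "body_neg r \<inter> Ms i = {}" using r(2) unfolding Ms_def by auto
            ultimately have "head r \<inter> N \<noteq> {}" using nm ri unfolding model_reduct by blast
            thus ?thesis unfolding N'_def by auto
          qed
        qed
        ultimately show False using mn by blast
      qed
      show ?thesis using m1 m2 by (auto simp: stable_iff)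
    qed
    have s2: "Ms i = Ms (Suc i) \<inter> atom (Ps i)" for i
      using F4'[of i "Suc i"] unfolding Ms_def U_def[symmetric] by auto
    have s3: "M = (\<Union>i. Ms i)"
    proof
      show "(\<Union>i. Ms i) \<subseteq> M" unfolding Ms_def by auto
      show "M \<subseteq> (\<Union>i. Ms i)"
      proof
        fix a assume a: "a \<in> M"
        have "\<exists>r\<in>P. a \<in> head r"
        proof (rule ccontr)
          assume na: "\<not> (\<exists>r\<in>P. a \<in> head r)"
          have "is_model (reduct P M) (M - {a})"
            unfolding model_reduct
          proof (intro ballI impI)
            fix r assume r: "r \<in> P" "body_neg r \<inter> M = {}" "body_pos r \<subseteq> M - {a}"
            hence "head r \<inter> M \<noteq> {}" using mod unfolding model_reduct by blast
            thus "head r \<inter> (M - {a}) \<noteq> {}" using na r(1) by auto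
          qed
          moreover have "M - {a} \<subset> M" using a by auto
          ultimately show False using mn by blast
        qed
        then obtain r where "r \<in> P" "a \<in> head r" by blast
        then obtain j where "a \<in> U j" using F6 by blast
        thus "a \<in> (\<Union>i. Ms i)" using a unfolding Ms_def by auto
      qed
    qed
    show "\<exists>Ms. (\<forall>i. stable_model (Ps i) (Ms i)) \<and> (\<forall>i. Ms i = Ms (Suc i) \<inter> atom (Ps i)) \<and> M = (\<Union>i. Ms i)"
      using s1 s2 s3 by blast
  next
    assume "\<exists>Ms. (\<forall>i. stable_model (Ps i) (Ms i)) \<and> (\<forall>i. Ms i = Ms (Suc i) \<inter> atom (Ps i)) \<and> M = (\<Union>i. Ms i)"
    then obtain Ms where s1: "\<And>i. stable_model (Ps i) (Ms i)"
      and s2: "\<And>i. Ms i = Ms (Suc i) \<inter> U i" and s3: "M = (\<Union>i. Ms i)"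
      unfolding U_def by blast
    have gen: "Ms i = Ms (i + d) \<inter> U i" for i d
    proof (induction d)
      case 0
      have "Ms i \<subseteq> U i" using s2[of i] by auto
      thus ?case by auto
    next
      case (Suc d)
      have "Ms (i + d) = Ms (Suc (i + d)) \<inter> U (i + d)" by (rule s2)
      moreover have "U i \<subseteq> U (i + d)" using F4' by simp
      ultimately show ?case using Suc by auto
    qed
    have MU: "Ms i = M \<inter> U i" for i
    proof
      show "Ms i \<subseteq> M \<inter> U i" using s3 gen[of i 0] by auto
      show "M \<inter> U i \<subseteq> Ms i"
      proof
        fix a assume "a \<in> M \<inter> U i"
        then obtain k where k: "a \<in> Ms k" "a \<in> U i" using s3 by auto
        show "a \<in> Ms i"
        proof (cases "k \<le> i")
          case True
          have "Ms k = Ms (k + (i - k)) \<inter> U k" by (rule gen)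
          thus ?thesis using k True by auto
        next
          case False
          have "Ms i = Ms (i + (k - i)) \<inter> U i" by (rule gen)
          thus ?thesis using k False by auto
        qed
      qed
    qed
    have mi: "is_model (reduct (Ps i) (Ms i)) (Ms i)"
      and mni: "\<And>N. N \<subset> Ms i \<Longrightarrow> \<not> is_model (reduct (Ps i) (Ms i)) N" for i
      using s1[of i] by (auto simp: stable_iff)
    have m1: "is_model (reduct P M) M"
      unfolding model_reduct
    proof (intro ballI impI)
      fix r assume r: "r \<in> P" "body_neg r \<inter> M = {}" "body_pos r \<subseteq> M"
      obtain j where rj: "r \<in> Ps j" using F5 r(1) by blast
      have at: "atoms_of_rule r \<subseteq> U j" using F2 rj .
      have "body_neg r \<inter> Ms j = {}" using r(2) MU by auto
      moreover have "body_pos r \<subseteq> Ms j" using r(3) at MU unfolding atoms_of_rule_def by auto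
      ultimately have "head r \<inter> Ms j \<noteq> {}" using mi rj unfolding model_reduct by blast
      thus "head r \<inter> M \<noteq> {}" using MU by auto
    qed
    have m2: "\<not> is_model (reduct P M) N" if N: "N \<subset> M" for N
    proof
      assume nm: "is_model (reduct P M) N"
      obtain a where a: "a \<in> M" "a \<notin> N" using N by blast
      then obtain j where aj: "a \<in> Ms j" using s3 by auto
      have "N \<inter> U j \<subset> Ms j" using N a aj MU by auto
      moreover have "is_model (reduct (Ps j) (Ms j)) (N \<inter> U j)"
        unfolding model_reduct
      proof (intro ballI impI)
        fix r assume r: "r \<in> Ps j" "body_neg r \<inter> Ms j = {}" "body_pos r \<subseteq> N \<inter> U j"
        have at: "atoms_of_rule r \<subseteq> U j" using F2 r(1) .
        have "body_neg r \<inter> M = {}" using r(2) at MU unfolding atoms_of_rule_def by auto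
        moreover have "body_pos r \<subseteq> N" using r(3) by auto
        ultimately have "head r \<inter> N \<noteq> {}" using nm r(1) F1 unfolding model_reduct by blast
        thus "head r \<inter> (N \<inter> U j) \<noteq> {}" using at unfolding atoms_of_rule_def by auto
      qed
      ultimately show False using mni by blast
    qed
    show "stable_model P M" using m1 m2 by (auto simp: stable_iff)
  qed
qed

end
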